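(* Let $Y_1,\dots,Y_n$ be independent with $Y_i\sim\mathcal N(\mu_i,\sigma^2)$, known $\sigma>0$, and $\mu_1\le\dots\le\mu_n$. Let $1-\alpha\in(0,1)$, $\mathcal J^{full}=\{(j,k)\in\{1,\dots,n\}^2:j\le k\}$ and $\delta=\alpha/(2|\mathcal J^{full}|)=\alpha/(n^2+n)$. Define $$L^\alpha_{\mathbf Y,i}=\sup_{(j,k)\in\mathcal J^{full}:\mu_i\ge\mu_k}\Big(Z_{j:k}-\frac{\sigma\,\Phi^{-1}(1-\delta)}{\sqrt{k-j+1}}\Big),\quad U^\alpha_{\mathbf Y,i}=\inf_{(j,k)\in\mathcal J^{full}:\mu_i\le\mu_j}\Big(Z_{j:k}-\frac{\sigma\,\Phi^{-1}(\delta)}{\sqrt{k-j+1}}\Big),$$ with $Z_{j:k}=\frac1{k-j+1}\sum_{i=j}^kY_i$, and the Yang--Barber bounds $$L^{\alpha,YB}_{\mathbf Y,i}=\sup_{(j,k)\in\mathcal J^{full}:\mu_i\ge\mu_k}\Big(Z^{Iso}_{j:k}-\frac{\sqrt{2\sigma^2\log(1/\delta)}}{\sqrt{k-j+1}}\Big),\quad U^{\alpha,YB}_{\mathbf Y,i}=\inf_{(j,k)\in\mathcal J^{full}:\mu_i\le\mu_j}\Big(Z^{Iso}_{j:k}+\frac{\sqrt{2\sigma^2\log(1/\delta)}}{\sqrt{k-j+1}}\Big),$$ with $Z^{Iso}_{j:k}=\frac1{k-j+1}\sum_{i=j}^k\widehat\mu^{Iso}_i$. Then $L^\alpha_{\mathbf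 Y,i}\ge L^{\alpha,YB}_{\mathbf Y,i}$ and $U^\alpha_{\mathbf Y,i}\le U^{\alpha,YB}_{\mathbf Y,i}$ for all $1\le i\le n$.
   Context: $\Phi^{-1}(\delta)$ is the $\delta$-quantile of the standard normal distribution. $\widehat{\boldsymbol\mu}^{Iso}=(\widehat\mu^{Iso}_1,\dots,\widehat\mu^{Iso}_n)$ is the (unweighted) isotonic regression of $\mathbf Y$: the minimizer of $\sum_{i=1}^n(Y_i-m_i)^2$ over $\mathbf m\in\mathbb R^n$ with $m_1\le\dots\le m_n$. (The bounds $L^\alpha,U^\alpha$ are those of the paper's normal-case calibration band with volumes $v_i=1$ and dispersion $\varphi=\sigma^2$.) *)

theory Defs
  imports "HOL-Probability.Probability"
begin

definition std_normal_cdf :: "real \<Rightarrow> real" where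
  "std_normal_cdf x = (LBINT t:{..x}. std_normal_density t)"

definition std_normal_quantile :: "real \<Rightarrow> real" where
  "std_normal_quantile d = Inf {x. d \<le> std_normal_cdf x}"

text \<open>Vectors are functions on indices 1..n. Nondecreasing on 1..n.\<close>
definition nondecr :: "nat \<Rightarrow> (nat \<Rightarrow> real) \<Rightarrow> bool" where
  "nondecr n m \<longleftrightarrow> (\<forall>i j. 1 \<le> i \<longrightarrow> i \<le> j \<longrightarrow> j \<le> n \<longrightarrow> m i \<le> m j)"

text \<open>m is the (unweighted) isotonic regression of Y: a minimiser of the
  squared error over nondecreasing vectors (this minimiser exists and is unique).\<close>
definition is_iso_reg :: "nat \<Rightarrow> (nat \<Rightarrow> real) \<Rightarrow> (nat \<Rightarrow> real) \<Rightarrow> bool" where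
  "is_iso_reg n Y m \<longleftrightarrow> nondecr n m \<and>
     (\<forall>m'. nondecr n m' \<longrightarrow> (\<Sum>i=1..n. (Y i - m i)^2) \<le> (\<Sum>i=1..n. (Y i - m' i)^2))"

definition Jfull :: "nat \<Rightarrow> (nat \<times> nat) set" where
  "Jfull n = {(j,k). 1 \<le> j \<and> j \<le> k \<and> k \<le> n}"

definition blockavg :: "(nat \<Rightarrow> real) \<Rightarrow> nat \<Rightarrow> nat \<Rightarrow> real" where
  "blockavg Y j k = (\<Sum>l=j..k. Y l) / real (k - j + 1)"

end

theory Submission
  imports Defs "HOL-Real_Asymp.Real_Asymp"
begin


lemma phi_eq: "std_normal_density x = exp (- x\<^sup>2 / 2) / sqrt (2 * pi)"
  by (simp add: std_normal_density_def)

lemma tail_hbi: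
  fixes a :: real assumes a: "a > 0"
  shows "has_bochner_integral lborel (\<lambda>s. indicator {a..} s *\<^sub>R (s / a * std_normal_density s)) (std_normal_density a / a)"
proof -
  have "(\<integral>\<^sup>+s. ennreal (s / a * std_normal_density s) * indicator {a..} s \<partial>lborel)
        = ennreal (0 - (- std_normal_density a / a))"
  proof (rule nn_integral_FTC_atLeast[where F="\<lambda>s. - std_normal_density s / a"])
    show "(\<lambda>s. s / a * std_normal_density s) \<in> borel_measurable borel" by measurable
    show "\<And>x. a \<le> x \<Longrightarrow> ((\<lambda>s. - std_normal_density s / a) has_real_derivative x / a * std_normal_density x) (at x)"
      unfolding phi_eq using a
      by (auto intro!: derivative_eq_intros simp: field_simps power2_eq_square)
    show "\<And>x. a \<le> x \<Longrightarrow> 0 \<le> x / a * std_normal_density x" using a by auto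
    have "((\<lambda>x::real. exp (- x\<^sup>2 / 2)) \<longlongrightarrow> 0) at_top" by real_asymp
    then have "((\<lambda>x::real. - (exp (- x\<^sup>2 / 2) / sqrt (2 * pi)) / a) \<longlongrightarrow> - (0 / sqrt (2 * pi)) / a) at_top"
      by (intro tendsto_intros) (use a in auto)
    then show "((\<lambda>s. - std_normal_density s / a) \<longlongrightarrow> 0) at_top"
      unfolding phi_eq by simp
  qed
  also have "\<dots> = ennreal (std_normal_density a / a)" by simp
  finally have I: "(\<integral>\<^sup>+s. ennreal (s / a * std_normal_density s) * indicator {a..} s \<partial>lborel) = ennreal (std_normal_density a / a)" .
  have "(\<integral>\<^sup>+s. ennreal (indicator {a..} s *\<^sub>R (s / a * std_normal_density s)) \<partial>lborel)
     = (\<integral>\<^sup>+s. ennreal (s / a * std_normal_density s) * indicator {a..} s \<partial>lborel)"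
    by (intro nn_integral_cong) (auto split: split_indicator)
  with I show ?thesis
    by (intro has_bochner_integral_nn_integral) (use a in \<open>auto split: split_indicator\<close>)
qed

lemma upper_tail:
  fixes a :: real assumes a: "a > 0"
  shows "(\<integral>s. indicator {a..} s *\<^sub>R std_normal_density s \<partial>lborel) \<le> std_normal_density a / a"
proof -
  have h: "has_bochner_integral lborel (\<lambda>s. indicator {a..} s *\<^sub>R (s / a * std_normal_density s)) (std_normal_density a / a)"
    by (rule tail_hbi[OF a])
  have "(\<integral>s. indicator {a..} s *\<^sub>R std_normal_density s \<partial>lborel)
      \<le> (\<integral>s. indicator {a..} s *\<^sub>R (s / a * std_normal_density s) \<partial>lborel)"
  proof (rule integral_mono)
    show "integrable lborel (\<lambda>s. indicator {a..} s *\<^sub>R std_normal_density s)"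
      by (intro integrable_mult_indicator) auto
    show "integrable lborel (\<lambda>s. indicator {a..} s *\<^sub>R (s / a * std_normal_density s))"
      using h by (simp add: has_bochner_integral_iff)
    fix s show "indicator {a..} s *\<^sub>R std_normal_density s \<le> indicator {a..} s *\<^sub>R (s / a * std_normal_density s)"
      using a by (auto split: split_indicator intro!: mult_right_mono simp: field_simps)
  qed
  also have "\<dots> = std_normal_density a / a" using h by (simp add: has_bochner_integral_iff)
  finally show ?thesis .
qed

lemma Phi_neg:
  fixes x :: real assumes x: "x < 0"
  shows "std_normal_cdf x \<le> std_normal_density x / (- x)"
proof -
  have "std_normal_cdf x = (\<integral>s. indicator {..x} s *\<^sub>R std_normal_density s \<partial>lborel)"
    by (simp add: std_normal_cdf_def set_lebesgue_integral_def)
  also have "\<dots> = \<bar>-1\<bar> *\<^sub>R (\<integral>s. indicator {..x} (0 + -1 * s) *\<^sub>R std_normal_density (0 + -1 * s) \<partial>lborel)"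
    by (rule lborel_integral_real_affine) simp
  also have "\<dots> = (\<integral>s. indicator {-x..} s *\<^sub>R std_normal_density s \<partial>lborel)"
  proof -
    have e: "(\<lambda>s. indicator {..x} (0 + -1 * s) *\<^sub>R std_normal_density (0 + -1 * s)) = (\<lambda>s. indicator {-x..} s *\<^sub>R std_normal_density s)"
      by (rule ext) (auto simp: phi_eq split: split_indicator)
    show ?thesis unfolding e by simp
  qed
  also have "\<dots> \<le> std_normal_density (-x) / (-x)"
    using x by (intro upper_tail) auto
  finally show ?thesis by (simp add: phi_eq)
qed

lemma Phi_pos:
  fixes t :: real assumes t: "t > 0"
  shows "1 - std_normal_density t / t \<le> std_normal_cdf t"
proof -
  have i1: "integrable lborel (\<lambda>s. indicator {..t} s *\<^sub>R std_normal_density s)"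
    by (intro integrable_mult_indicator) auto
  have i2: "integrable lborel (\<lambda>s. indicator {t<..} s *\<^sub>R std_normal_density s)"
    by (intro integrable_mult_indicator) auto
  have "1 = (\<integral>s. std_normal_density s \<partial>lborel)" by simp
  also have "\<dots> = (\<integral>s. indicator {..t} s *\<^sub>R std_normal_density s + indicator {t<..} s *\<^sub>R std_normal_density s \<partial>lborel)"
  proof -
    have e: "(\<lambda>s. indicator {..t} s *\<^sub>R std_normal_density s + indicator {t<..} s *\<^sub>R std_normal_density s) = std_normal_density"
      by (rule ext) (auto split: split_indicator)
    show ?thesis by (simp only: e)
  qed
  also have "\<dots> = std_normal_cdf t + (\<integral>s. indicator {t<..} s *\<^sub>R std_normal_density s \<partial>lborel)"
    using i1 i2 by (simp add: std_normal_cdf_def set_lebesgue_integral_def)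
  also have "(\<integral>s. indicator {t<..} s *\<^sub>R std_normal_density s \<partial>lborel) \<le> (\<integral>s. indicator {t..} s *\<^sub>R std_normal_density s \<partial>lborel)"
    by (intro integral_mono i2 integrable_mult_indicator) (auto split: split_indicator)
  also have "\<dots> \<le> std_normal_density t / t" by (rule upper_tail[OF t])
  finally show ?thesis by simp
qed

lemma quantile_bounds:
  fixes d :: real assumes d: "0 < d" "d < 1/2"
  defines "t \<equiv> sqrt (2 * ln (1 / d))"
  shows "std_normal_quantile (1 - d) \<le> t" "- t \<le> std_normal_quantile d"
proof -
  have l2: "ln 2 < ln (1 / d)" using d by (intro ln_less_cancel_iff[THEN iffD2]) (auto simp: field_simps)
  have "2/3 \<le> ln (2::real)" by (rule ln2_ge_two_thirds)
  hence lpos: "ln (1 / d) > 2/3" using l2 by linarith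
  have t2: "t\<^sup>2 = 2 * ln (1 / d)" unfolding t_def using lpos by simp
  have t1: "t > 1"
  proof -
    have "1 < 2 * ln (1 / d)" using lpos by linarith
    hence "sqrt 1 < t" unfolding t_def by (subst real_sqrt_less_iff) simp
    thus ?thesis by simp
  qed
  have et: "exp (- t\<^sup>2 / 2) = d" using d by (simp add: t2 exp_minus ln_div)
  have sp: "sqrt (2 * pi) > 2"
  proof -
    have "sqrt 4 < sqrt (2 * pi)" using pi_gt3 by (subst real_sqrt_less_iff) simp
    thus ?thesis by simp
  qed
  have phit: "std_normal_density t \<le> d" using sp d pi_gt3 unfolding phi_eq et by (simp add: field_simps)
  have Phit: "1 - d \<le> std_normal_cdf t"
  proof -
    have "std_normal_density t / t \<le> std_normal_density t / 1" using t1
      by (intro divide_left_mono) auto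
    thus ?thesis using Phi_pos[of t] t1 phit by linarith
  qed
  have negb: "std_normal_cdf x \<le> exp (- x\<^sup>2 / 2) / 2" if x: "x < -1" for x
  proof -
    have "std_normal_cdf x \<le> std_normal_density x / (- x)" using x by (intro Phi_neg) auto
    also have "\<dots> \<le> std_normal_density x / 1" using x
      by (intro divide_left_mono) auto
    also have "\<dots> \<le> exp (- x\<^sup>2 / 2) / 2" unfolding phi_eq div_by_1 using sp
      by (intro divide_left_mono) auto
    finally show ?thesis .
  qed
  show "std_normal_quantile (1 - d) \<le> t"
    unfolding std_normal_quantile_def
  proof (rule cInf_lower)
    show "t \<in> {x. 1 - d \<le> std_normal_cdf x}" using Phit by simp
    show "bdd_below {x. 1 - d \<le> std_normal_cdf x}"
    proof (rule bdd_belowI)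
      fix x assume "x \<in> {x. 1 - d \<le> std_normal_cdf x}"
      hence hx: "1 - d \<le> std_normal_cdf x" by simp
      show "-1 \<le> x"
      proof (rule ccontr)
        assume "\<not> -1 \<le> x"
        hence "x < -1" by simp
        hence "std_normal_cdf x \<le> exp (- x\<^sup>2 / 2) / 2" by (rule negb)
        moreover have "exp (- x\<^sup>2 / 2) \<le> 1" by simp
        ultimately show False using hx d by linarith
      qed
    qed
  qed
  show "- t \<le> std_normal_quantile d"
    unfolding std_normal_quantile_def
  proof (rule cInf_greatest)
    have "t \<in> {x. d \<le> std_normal_cdf x}" using Phit d by simp
    thus "{x. d \<le> std_normal_cdf x} \<noteq> {}" by blast
    fix x assume "x \<in> {x. d \<le> std_normal_cdf x}"
    hence hx: "d \<le> std_normal_cdf x" by simp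
    show "- t \<le> x"
    proof (rule ccontr)
      assume "\<not> - t \<le> x"
      hence xt: "x < - t" by simp
      hence "std_normal_cdf x \<le> exp (- x\<^sup>2 / 2) / 2" using t1 by (intro negb) auto
      moreover have "exp (- x\<^sup>2 / 2) \<le> exp (- t\<^sup>2 / 2)"
      proof -
        have "t\<^sup>2 \<le> (-x)\<^sup>2" using xt t1 by (intro power_mono) auto
        hence "t\<^sup>2 \<le> x\<^sup>2" by simp
        thus ?thesis by simp
      qed
      ultimately show False using hx d et by linarith
    qed
  qed
qed



lemma sum_if_window:
  fixes g :: "nat \<Rightarrow> real"
  assumes "1 \<le> j" "k \<le> n"
  shows "(\<Sum>l=1..n. if j \<le> l \<and> l \<le> k then g l else 0) = (\<Sum>l=j..k. g l)"
proof -
  have "(\<Sum>l=1..n. if j \<le> l \<and> l \<le> k then g l else 0) = sum g {l\<in>{1..n}. j \<le> l \<and> l \<le> k}"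
    by (rule sum.inter_filter[symmetric]) simp
  also have "{l\<in>{1..n}. j \<le> l \<and> l \<le> k} = {j..k}" using assms by auto
  finally show ?thesis .
qed

lemma iso_perturb:
  fixes Y m m' :: "nat \<Rightarrow> real"
  assumes iso: "is_iso_reg n Y m" and j: "1 \<le> j" "j \<le> k" "k \<le> n"
    and m': "m' = (\<lambda>l. if j \<le> l \<and> l \<le> k then m l + e else m l)"
    and nd: "nondecr n m'"
  shows "0 \<le> 2 * e * (\<Sum>l=j..k. m l - Y l) + e\<^sup>2 * real (k - j + 1)"
proof -
  have opt: "(\<Sum>i=1..n. (Y i - m i)^2) \<le> (\<Sum>i=1..n. (Y i - m' i)^2)"
    using iso nd unfolding is_iso_reg_def by blast
  have "(\<Sum>i=1..n. (Y i - m' i)^2) - (\<Sum>i=1..n. (Y i - m i)^2)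
      = (\<Sum>i=1..n. (Y i - m' i)^2 - (Y i - m i)^2)" by (simp add: sum_subtractf)
  also have "\<dots> = (\<Sum>i=1..n. if j \<le> i \<and> i \<le> k then 2 * e * (m i - Y i) + e\<^sup>2 else 0)"
    by (intro sum.cong) (auto simp: m' power2_eq_square algebra_simps)
  also have "\<dots> = (\<Sum>i=j..k. 2 * e * (m i - Y i) + e\<^sup>2)"
    using j by (intro sum_if_window) auto
  also have "\<dots> = 2 * e * (\<Sum>l=j..k. m l - Y l) + e\<^sup>2 * real (k - j + 1)"
    using j by (simp add: sum.distrib sum_distrib_left)
  finally show ?thesis using opt by linarith
qed

lemma small_pert:
  fixes S e0 :: real and len :: nat
  assumes "S < 0" "e0 > 0" "len > 0"
    and h: "\<And>e. 0 < e \<Longrightarrow> e \<le> e0 \<Longrightarrow> 0 \<le> 2 * e * S + e\<^sup>2 * real len"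
  shows False
proof -
  define e where "e = min e0 (- S / real len)"
  have "S / real len < 0" using assms by (simp add: divide_neg_pos)
  hence e0: "0 < e" "e \<le> e0" using assms by (auto simp: e_def)
  have "e * real len \<le> - S" using assms by (auto simp: e_def min_def field_simps split: if_splits)
  hence "e * (e * real len) \<le> e * (- S)" using e0 by (intro mult_left_mono) auto
  hence "2 * e * S + e\<^sup>2 * real len \<le> e * S" by (simp add: power2_eq_square algebra_simps)
  moreover have "e * S < 0" using e0 assms by (simp add: mult_pos_neg)
  ultimately show False using h[OF e0] by linarith
qed

lemma iso_start:
  fixes Y m :: "nat \<Rightarrow> real"
  assumes iso: "is_iso_reg n Y m" and j: "1 \<le> j" "j \<le> k" "k \<le> n"
    and st: "j = 1 \<or> m (j - 1) < m j"
  shows "0 \<le> (\<Sum>l=j..k. Y l - m l)"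
proof (rule ccontr)
  assume "\<not> ?thesis"
  hence S: "(\<Sum>l=j..k. m l - Y l) > 0" by (simp add: sum_subtractf)
  have nd: "nondecr n m" using iso unfolding is_iso_reg_def by blast
  define e0 where "e0 = (if j = 1 then 1 else m j - m (j - 1))"
  have e0: "e0 > 0" using st by (auto simp: e0_def)
  show False
  proof (rule small_pert[of "- (\<Sum>l=j..k. m l - Y l)" e0 "k - j + 1"])
    fix e :: real assume e: "0 < e" "e \<le> e0"
    define m' where "m' = (\<lambda>l. if j \<le> l \<and> l \<le> k then m l + (-e) else m l)"
    have "nondecr n m'" unfolding nondecr_def
    proof (intro allI impI)
      fix a b assume ab: "1 \<le> a" "a \<le> b" "b \<le> n"
      have mab: "m a \<le> m b" using nd ab unfolding nondecr_def by blast
      show "m' a \<le> m' b"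
      proof (cases "j \<le> a \<and> a \<le> k")
        case True thus ?thesis using mab e by (auto simp: m'_def)
      next
        case False
        show ?thesis
        proof (cases "j \<le> b \<and> b \<le> k")
          case False thus ?thesis using mab \<open>\<not> (j \<le> a \<and> a \<le> k)\<close> by (auto simp: m'_def)
        next
          case True
          hence "a < j" using \<open>\<not> (j \<le> a \<and> a \<le> k)\<close> ab by auto
          hence j2: "j \<noteq> 1" "a \<le> j - 1" using ab by auto
          have "m a \<le> m (j - 1)" using nd ab j2 j unfolding nondecr_def by auto
          moreover have "m j \<le> m b" using nd ab True j unfolding nondecr_def by auto
          moreover have "e \<le> m j - m (j - 1)" using e j2 by (simp add: e0_def)
          ultimately show ?thesis using True \<open>\<not> (j \<le> a \<and> a \<le> k)\<close> by (auto simp: m'_def)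
        qed
      qed
    qed
    from iso_perturb[OF iso j m'_def this]
    show "0 \<le> 2 * e * - (\<Sum>l=j..k. m l - Y l) + e\<^sup>2 * real (k - j + 1)" by simp
  qed (use S e0 in auto)
qed

lemma iso_end:
  fixes Y m :: "nat \<Rightarrow> real"
  assumes iso: "is_iso_reg n Y m" and j: "1 \<le> j" "j \<le> k" "k \<le> n"
    and st: "k = n \<or> m k < m (k + 1)"
  shows "(\<Sum>l=j..k. Y l - m l) \<le> 0"
proof (rule ccontr)
  assume "\<not> ?thesis"
  hence S: "(\<Sum>l=j..k. m l - Y l) < 0" by (simp add: sum_subtractf)
  have nd: "nondecr n m" using iso unfolding is_iso_reg_def by blast
  define e0 where "e0 = (if k = n then 1 else m (k + 1) - m k)"
  have e0: "e0 > 0" using st by (auto simp: e0_def)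
  show False
  proof (rule small_pert[of "(\<Sum>l=j..k. m l - Y l)" e0 "k - j + 1"])
    fix e :: real assume e: "0 < e" "e \<le> e0"
    define m' where "m' = (\<lambda>l. if j \<le> l \<and> l \<le> k then m l + e else m l)"
    have "nondecr n m'" unfolding nondecr_def
    proof (intro allI impI)
      fix a b assume ab: "1 \<le> a" "a \<le> b" "b \<le> n"
      have mab: "m a \<le> m b" using nd ab unfolding nondecr_def by blast
      show "m' a \<le> m' b"
      proof (cases "j \<le> b \<and> b \<le> k")
        case True thus ?thesis using mab e ab by (auto simp: m'_def)
      next
        case False
        show ?thesis
        proof (cases "j \<le> a \<and> a \<le> k")
          case False thus ?thesis using mab \<open>\<not> (j \<le> b \<and> b \<le> k)\<close> by (auto simp: m'_def)
        next
          case True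
          hence "k < b" using \<open>\<not> (j \<le> b \<and> b \<le> k)\<close> ab by auto
          hence j2: "k \<noteq> n" "k + 1 \<le> b" using ab by auto
          have "m a \<le> m k" using nd ab True j unfolding nondecr_def by auto
          moreover have "m (k + 1) \<le> m b" using nd ab j2 j unfolding nondecr_def by auto
          moreover have "e \<le> m (k + 1) - m k" using e j2 by (simp add: e0_def)
          ultimately show ?thesis using True \<open>\<not> (j \<le> b \<and> b \<le> k)\<close> by (auto simp: m'_def)
        qed
      qed
    qed
    from iso_perturb[OF iso j m'_def this]
    show "0 \<le> 2 * e * (\<Sum>l=j..k. m l - Y l) + e\<^sup>2 * real (k - j + 1)" by simp
  qed (use S e0 in auto)
qed



lemma conv3:
  fixes D C t1 ts t2 :: real
  assumes "t2 < ts" "ts < t1" "D \<ge> 0"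
  shows "D*ts\<^sup>2 - C*ts \<le> max (D*t1\<^sup>2 - C*t1) (D*t2\<^sup>2 - C*t2)"
proof -
  have id: "(ts - t2) * (D*t1\<^sup>2 - C*t1) + (t1 - ts) * (D*t2\<^sup>2 - C*t2) - (t1 - t2) * (D*ts\<^sup>2 - C*ts)
        = D * ((t1 - ts) * (ts - t2) * (t1 - t2))"
    by (simp add: power2_eq_square algebra_simps)
  have "0 \<le> D * ((t1 - ts) * (ts - t2) * (t1 - t2))" using assms by simp
  hence "(t1 - t2) * (D*ts\<^sup>2 - C*ts) \<le> (ts - t2) * (D*t1\<^sup>2 - C*t1) + (t1 - ts) * (D*t2\<^sup>2 - C*t2)"
    using id by linarith
  also have "\<dots> \<le> (ts - t2) * max (D*t1\<^sup>2 - C*t1) (D*t2\<^sup>2 - C*t2) + (t1 - ts) * max (D*t1\<^sup>2 - C*t1) (D*t2\<^sup>2 - C*t2)"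
    using assms by (intro add_mono mult_left_mono) auto
  also have "\<dots> = (t1 - t2) * max (D*t1\<^sup>2 - C*t1) (D*t2\<^sup>2 - C*t2)" by (simp add: algebra_simps)
  finally show ?thesis using assms by simp
qed

lemma g_form:
  fixes D v C hr :: real and r :: nat
  assumes "r > 0" "hr = D + real r * v"
  shows "hr / real r - C / sqrt (real r) = (D * (1 / sqrt (real r))\<^sup>2 - C * (1 / sqrt (real r))) + v"
  using assms by (simp add: power2_eq_square field_simps)

lemma reduce:
  fixes w :: "nat \<Rightarrow> real" and C :: real and N s :: nat
  assumes C: "C \<ge> 0" and mono: "\<And>r. 1 \<le> r \<Longrightarrow> r < N \<Longrightarrow> w (r+1) \<le> w r"
    and s: "1 \<le> s" "s \<le> N"
  shows "\<exists>s0. 1 \<le> s0 \<and> s0 \<le> N \<and> (s0 = N \<or> w (s0+1) < w s0) \<and>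
           (\<Sum>q=1..s. w q) / real s - C / sqrt (real s) \<le> (\<Sum>q=1..s0. w q) / real s0 - C / sqrt (real s0)"
proof -
  define h where "h = (\<lambda>r. \<Sum>q=1..r. w q)"
  define g where "g = (\<lambda>r. h r / real r - C / sqrt (real r))"
  define good where "good = (\<lambda>r. r = N \<or> w (r+1) < w r)"
  define v where "v = w s"
  have hS: "h (Suc r) = h r + w (Suc r)" for r unfolding h_def by simp
  have wmono: "w b \<le> w a" if "1 \<le> a" "a \<le> b" "b \<le> N" for a b
    using that(2,3)
  proof (induction b rule: dec_induct)
    case base thus ?case by simp
  next
    case (step b) thus ?case using mono[of b] that(1) by force
  qed
  have ngood: "w (r+1) = w r" if "1 \<le> r" "r < N" "\<not> good r" for r
    using mono[OF that(1,2)] that(2,3) unfolding good_def by auto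
  have Dnn: "real s * v \<le> h s"
  proof -
    have "(\<Sum>q=1..s. v) \<le> (\<Sum>q=1..s. w q)" unfolding v_def using s by (intro sum_mono wmono) auto
    thus ?thesis by (simp add: h_def)
  qed
  define G where "G = {r. s \<le> r \<and> r \<le> N \<and> good r}"
  have NG: "N \<in> G" using s by (auto simp: G_def good_def)
  have finG: "finite G" by (auto simp: G_def)
  define hi where "hi = Min G"
  have hiG: "hi \<in> G" using NG finG unfolding hi_def by (intro Min_in) auto
  have hi_min: "\<not> good r" if "s \<le> r" "r < hi" for r
  proof
    assume "good r"
    hence "r \<in> G" using that hiG by (auto simp: G_def)
    hence "hi \<le> r" using finG unfolding hi_def by simp
    thus False using that by simp
  qed
  have hi: "s \<le> hi" "hi \<le> N" "good hi" using hiG by (auto simp: G_def)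
  have const_up: "w (s + d) = v \<and> h (s + d) = h s + real d * v" if "s + d \<le> hi" for d
    using that
  proof (induction d)
    case 0 thus ?case by (simp add: v_def)
  next
    case (Suc d)
    hence IH: "w (s + d) = v" "h (s + d) = h s + real d * v" by auto
    have "w (s + d + 1) = w (s + d)" using Suc.prems hi s by (intro ngood hi_min) auto
    thus ?case using IH hS[of "s + d"] by (simp add: algebra_simps)
  qed
  have hhi: "h hi = h s + real (hi - s) * v" using const_up[of "hi - s"] hi by simp
  show ?thesis
  proof (cases "hi = s")
    case True thus ?thesis using hi s unfolding good_def by auto
  next
    case hne: False
    hence shi: "s < hi" using hi by simp
    define B where "B = {r. 1 \<le> r \<and> r < s \<and> good r}"
    have finB: "finite B" by (auto simp: B_def)
    show ?thesis
    proof (cases "B = {}")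
      case True
      have cd: "w (s - d) = v" if "d < s" for d
        using that
      proof (induction d)
        case 0 thus ?case by (simp add: v_def)
      next
        case (Suc d)
        have "\<not> good (s - Suc d)" using True Suc.prems by (auto simp: B_def)
        hence "w (s - Suc d + 1) = w (s - Suc d)" using Suc.prems s by (intro ngood) auto
        moreover have "s - Suc d + 1 = s - d" using Suc.prems by simp
        ultimately show ?case using Suc by simp
      qed
      have "h s = (\<Sum>q=1..s. v)" unfolding h_def
      proof (intro sum.cong refl)
        fix q assume "q \<in> {1..s}"
        thus "w q = v" using cd[of "s - q"] by simp
      qed
      hence hs: "h s = real s * v" by simp
      have hh: "h hi = real hi * v" using hhi hs shi by (simp add: algebra_simps of_nat_diff)
      have "C / sqrt (real hi) \<le> C / sqrt (real s)"
        using C s shi by (intro divide_left_mono) auto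
      hence "g s \<le> g hi" unfolding g_def using hs hh s shi by simp
      thus ?thesis using hi s shi unfolding g_def h_def good_def by (intro exI[of _ hi]) auto
    next
      case False
      define lo where "lo = Max B"
      have loB: "lo \<in> B" using False finB unfolding lo_def by (intro Max_in) auto
      have lo: "1 \<le> lo" "lo < s" "good lo" using loB by (auto simp: B_def)
      have lo_max: "\<not> good r" if "lo < r" "r < s" for r
      proof
        assume "good r"
        hence "r \<in> B" using that lo by (auto simp: B_def)
        hence "r \<le> lo" using finB unfolding lo_def by simp
        thus False using that by simp
      qed
      have cdn: "(lo < s - d \<longrightarrow> w (s - d) = v) \<and> h s = h (s - d) + real d * v" if "lo \<le> s - d" "d \<le> s" for d
        using that
      proof (induction d)
        case 0 thus ?case by (simp add: v_def)
      next
        case (Suc d)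
        have e: "s - Suc d + 1 = s - d" "Suc (s - Suc d) = s - d" using Suc.prems lo by auto
        have IH: "w (s - d) = v" "h s = h (s - d) + real d * v" using Suc e by auto
        have "lo < s - Suc d \<longrightarrow> w (s - Suc d) = v"
        proof
          assume a: "lo < s - Suc d"
          have "\<not> good (s - Suc d)" using Suc.prems lo a by (intro lo_max) auto
          hence "w (s - Suc d + 1) = w (s - Suc d)" using Suc.prems s lo by (intro ngood) auto
          thus "w (s - Suc d) = v" using IH e by simp
        qed
        moreover have "h (s - d) = h (s - Suc d) + w (s - d)" using hS[of "s - Suc d"] e by simp
        ultimately show ?case using IH by (simp add: algebra_simps)
      qed
      have hlo: "h s = h lo + real (s - lo) * v" using cdn[of "s - lo"] lo by simp
      define D where "D = h s - real s * v"
      have D0: "D \<ge> 0" using Dnn by (simp add: D_def)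
      have glo: "g lo = (D * (1 / sqrt (real lo))\<^sup>2 - C * (1 / sqrt (real lo))) + v"
        unfolding g_def using lo hlo by (intro g_form) (auto simp: D_def of_nat_diff algebra_simps)
      have gs: "g s = (D * (1 / sqrt (real s))\<^sup>2 - C * (1 / sqrt (real s))) + v"
        unfolding g_def using s by (intro g_form) (auto simp: D_def)
      have ghi: "g hi = (D * (1 / sqrt (real hi))\<^sup>2 - C * (1 / sqrt (real hi))) + v"
        unfolding g_def using shi hhi by (intro g_form) (auto simp: D_def of_nat_diff algebra_simps)
      have t1: "1 / sqrt (real s) < 1 / sqrt (real lo)" using lo by (intro divide_strict_left_mono) auto
      have t2: "1 / sqrt (real hi) < 1 / sqrt (real s)" using shi s by (intro divide_strict_left_mono) auto
      have "g s \<le> max (g lo) (g hi)"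
        using conv3[OF t2 t1 D0, of C] unfolding glo gs ghi by simp
      thus ?thesis
      proof (cases "g lo \<le> g hi")
        case True thus ?thesis using \<open>g s \<le> max (g lo) (g hi)\<close> hi s shi unfolding g_def h_def good_def by (intro exI[of _ hi]) auto
      next
        case False thus ?thesis using \<open>g s \<le> max (g lo) (g hi)\<close> lo s unfolding g_def h_def good_def
          by (intro exI[of _ lo]) auto
      qed
    qed
  qed
qed



lemma rev_sum:
  fixes f :: "nat \<Rightarrow> real"
  shows "s \<le> k \<Longrightarrow> (\<Sum>q=1..s. f (k + 1 - q)) = (\<Sum>l=k+1-s..k. f l)"
proof (induction s)
  case 0 thus ?case by simp
next
  case (Suc s)
  have "(\<Sum>l=k-s..k. f l) = f (k - s) + (\<Sum>l=Suc (k-s)..k. f l)" by (rule sum.atLeast_Suc_atMost) simp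
  moreover have "Suc (k - s) = k + 1 - s" using Suc.prems by simp
  ultimately show ?case using Suc by simp
qed

lemma fwd_sum:
  fixes f :: "nat \<Rightarrow> real"
  shows "1 \<le> j \<Longrightarrow> (\<Sum>q=1..s. f (j + q - 1)) = (\<Sum>l=j..j+s-1. f l)"
proof (induction s)
  case 0 thus ?case by simp
next
  case (Suc s)
  have e: "j + Suc s - 1 = Suc (j + s - 1)" "Suc (j + s - 1) = j + s" using Suc.prems by auto
  have "(\<Sum>l=j..Suc (j+s-1). f l) = (\<Sum>l=j..j+s-1. f l) + f (Suc (j + s - 1))"
    using Suc.prems by (subst sum.cl_ivl_Suc) auto
  hence "(\<Sum>l=j..j+Suc s-1. f l) = (\<Sum>l=j..j+s-1. f l) + f (j + s)" by (simp only: e)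
  thus ?case using Suc by simp
qed

lemma L_red:
  fixes Y m :: "nat \<Rightarrow> real"
  assumes iso: "is_iso_reg n Y m" and C: "C \<ge> 0" and jk: "1 \<le> j" "j \<le> k" "k \<le> n"
  shows "\<exists>j0. 1 \<le> j0 \<and> j0 \<le> k \<and> blockavg m j k - C / sqrt (real (k - j + 1))
            \<le> blockavg Y j0 k - C / sqrt (real (k - j0 + 1))"
proof -
  have nd: "nondecr n m" using iso unfolding is_iso_reg_def by blast
  define w where "w = (\<lambda>r. m (k + 1 - r))"
  have mono: "w (r+1) \<le> w r" if "1 \<le> r" "r < k" for r
    unfolding w_def using nd that jk unfolding nondecr_def by auto
  have ks: "1 \<le> k + 1 - j" "k + 1 - j \<le> k" using jk by auto
  obtain s0 where s0: "1 \<le> s0" "s0 \<le> k" "s0 = k \<or> w (s0+1) < w s0"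
    and g: "(\<Sum>q=1..k+1-j. w q) / real (k+1-j) - C / sqrt (real (k+1-j))
           \<le> (\<Sum>q=1..s0. w q) / real s0 - C / sqrt (real s0)"
    using reduce[where w=w and C=C and N=k and s="k + 1 - j", OF C mono ks] by blast
  define j0 where "j0 = k + 1 - s0"
  have j0: "1 \<le> j0" "j0 \<le> k" "k - j0 + 1 = s0" using s0 by (auto simp: j0_def)
  have sw1: "(\<Sum>q=1..k+1-j. w q) = (\<Sum>l=j..k. m l)" unfolding w_def
    using rev_sum[of "k+1-j" k m] jk by simp
  have sw2: "(\<Sum>q=1..s0. w q) = (\<Sum>l=j0..k. m l)" unfolding w_def j0_def
    using rev_sum[of s0 k m] s0 by simp
  have st: "j0 = 1 \<or> m (j0 - 1) < m j0"
    using s0(3) s0(2) unfolding w_def j0_def by (auto simp: Suc_diff_le)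
  have "0 \<le> (\<Sum>l=j0..k. Y l - m l)" using iso_start[OF iso j0(1,2) jk(3) st] .
  hence "(\<Sum>l=j0..k. m l) \<le> (\<Sum>l=j0..k. Y l)" by (simp add: sum_subtractf)
  hence "blockavg m j0 k \<le> blockavg Y j0 k" unfolding blockavg_def
    by (intro divide_right_mono) auto
  moreover have "blockavg m j k - C / sqrt (real (k - j + 1)) \<le> blockavg m j0 k - C / sqrt (real (k - j0 + 1))"
    using g jk unfolding blockavg_def sw1 sw2 j0(3) by (simp add: Suc_diff_le)
  ultimately show ?thesis using j0 by (intro exI[of _ j0]) auto
qed

lemma U_red:
  fixes Y m :: "nat \<Rightarrow> real"
  assumes iso: "is_iso_reg n Y m" and C: "C \<ge> 0" and jk: "1 \<le> j" "j \<le> k" "k \<le> n"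
  shows "\<exists>k0. j \<le> k0 \<and> k0 \<le> n \<and> blockavg Y j k0 + C / sqrt (real (k0 - j + 1))
            \<le> blockavg m j k + C / sqrt (real (k - j + 1))"
proof -
  have nd: "nondecr n m" using iso unfolding is_iso_reg_def by blast
  define w where "w = (\<lambda>r. - m (j + r - 1))"
  have mono: "w (r+1) \<le> w r" if "1 \<le> r" "r < n + 1 - j" for r
    unfolding w_def using nd that jk unfolding nondecr_def by auto
  have ks: "1 \<le> k + 1 - j" "k + 1 - j \<le> n + 1 - j" using jk by auto
  obtain s0 where s0: "1 \<le> s0" "s0 \<le> n + 1 - j" "s0 = n + 1 - j \<or> w (s0+1) < w s0"
    and g: "(\<Sum>q=1..k+1-j. w q) / real (k+1-j) - C / sqrt (real (k+1-j))
           \<le> (\<Sum>q=1..s0. w q) / real s0 - C / sqrt (real s0)"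
    using reduce[where w=w and C=C and N="n + 1 - j" and s="k + 1 - j", OF C mono ks] by blast
  define k0 where "k0 = j + s0 - 1"
  have k0: "j \<le> k0" "k0 \<le> n" "k0 - j + 1 = s0" using s0 jk by (auto simp: k0_def)
  have sw1: "(\<Sum>q=1..k+1-j. w q) = - (\<Sum>l=j..k. m l)" unfolding w_def
    using fwd_sum[of j "\<lambda>l. - m l" "k+1-j"] jk by (simp add: sum_negf)
  have sw2: "(\<Sum>q=1..s0. w q) = - (\<Sum>l=j..k0. m l)" unfolding w_def k0_def
    using fwd_sum[of j "\<lambda>l. - m l" s0] jk by (simp add: sum_negf)
  have st: "k0 = n \<or> m k0 < m (k0 + 1)"
    using s0 jk unfolding w_def k0_def by auto
  have "(\<Sum>l=j..k0. Y l - m l) \<le> 0" using iso_end[OF iso jk(1) k0(1,2) st] .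
  hence "(\<Sum>l=j..k0. Y l) \<le> (\<Sum>l=j..k0. m l)" by (simp add: sum_subtractf)
  hence "blockavg Y j k0 \<le> blockavg m j k0" unfolding blockavg_def
    by (intro divide_right_mono) auto
  moreover have "blockavg m j k0 + C / sqrt (real (k0 - j + 1)) \<le> blockavg m j k + C / sqrt (real (k - j + 1))"
    using g jk unfolding blockavg_def sw1 sw2 k0(3) by (simp add: Suc_diff_le)
  ultimately show ?thesis using k0 by (intro exI[of _ k0]) auto
qed



theorem theorem5p4:
  fixes n :: nat and Y mu muIso :: "nat \<Rightarrow> real" and sigma alpha :: real
  assumes sigma_pos: "sigma > 0"
    and alpha: "0 < alpha" "alpha < 1"
    and mono_mu: "nondecr n mu"
    and iso: "is_iso_reg n Y muIso"
  defines "delta \<equiv> alpha / (2 * real (card (Jfull n)))"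
  defines "L \<equiv> \<lambda>i. (SUP (j,k) \<in> {(j,k) \<in> Jfull n. mu i \<ge> mu k}.
              blockavg Y j k - sigma * std_normal_quantile (1 - delta) / sqrt (real (k - j + 1)))"
  defines "U \<equiv> \<lambda>i. (INF (j,k) \<in> {(j,k) \<in> Jfull n. mu i \<le> mu j}.
              blockavg Y j k - sigma * std_normal_quantile delta / sqrt (real (k - j + 1)))"
  defines "LYB \<equiv> \<lambda>i. (SUP (j,k) \<in> {(j,k) \<in> Jfull n. mu i \<ge> mu k}.
              blockavg muIso j k - sqrt (2 * sigma^2 * ln (1 / delta)) / sqrt (real (k - j + 1)))"
  defines "UYB \<equiv> \<lambda>i. (INF (j,k) \<in> {(j,k) \<in> Jfull n. mu i \<le> mu j}.
              blockavg muIso j k + sqrt (2 * sigma^2 * ln (1 / delta)) / sqrt (real (k - j + 1)))"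
  shows "\<forall>i. 1 \<le> i \<and> i \<le> n \<longrightarrow> L i \<ge> LYB i \<and> U i \<le> UYB i"
proof (intro allI impI)
  fix i assume i: "1 \<le> i \<and> i \<le> n"
  have finJ: "finite (Jfull n)"
    by (rule finite_subset[of _ "{1..n} \<times> {1..n}"]) (auto simp: Jfull_def)
  have "(1,1) \<in> Jfull n" using i by (auto simp: Jfull_def)
  hence cardJ: "card (Jfull n) \<ge> 1" using finJ by (metis One_nat_def Suc_leI card_gt_0_iff empty_iff)
  have d0: "0 < delta" using alpha cardJ by (simp add: delta_def)
  have "delta \<le> alpha / 2" unfolding delta_def using alpha cardJ
    by (intro divide_left_mono) auto
  hence d1: "delta < 1/2" using alpha by simp
  define t where "t = sqrt (2 * ln (1 / delta))"
  define C' where "C' = sqrt (2 * sigma^2 * ln (1 / delta))"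
  have C't: "C' = sigma * t" unfolding C'_def t_def using sigma_pos
    by (simp add: real_sqrt_mult mult.assoc[symmetric] mult.commute[of 2])
  have qb: "std_normal_quantile (1 - delta) \<le> t" "- t \<le> std_normal_quantile delta"
    using quantile_bounds[OF d0 d1] unfolding t_def by auto
  have qL: "sigma * std_normal_quantile (1 - delta) \<le> C'"
    unfolding C't using qb sigma_pos by (intro mult_left_mono) auto
  have qU: "- (sigma * std_normal_quantile delta) \<le> C'"
  proof -
    have "sigma * (- t) \<le> sigma * std_normal_quantile delta" using qb sigma_pos by (intro mult_left_mono) auto
    thus ?thesis unfolding C't by simp
  qed
  have "ln (1 / delta) \<ge> 0" using d0 d1 by simp
  hence C'0: "C' \<ge> 0" unfolding C'_def by simp
  define A where "A = {(j,k) \<in> Jfull n. mu i \<ge> mu k}"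
  define B where "B = {(j,k) \<in> Jfull n. mu i \<le> mu j}"
  have finA: "finite A" unfolding A_def by (rule finite_subset[OF _ finJ]) auto
  have finB: "finite B" unfolding B_def by (rule finite_subset[OF _ finJ]) auto
  have iA: "(i,i) \<in> A" using i by (auto simp: A_def Jfull_def)
  have iB: "(i,i) \<in> B" using i by (auto simp: B_def Jfull_def)
  define FL where "FL = (\<lambda>(j,k). blockavg Y j k - sigma * std_normal_quantile (1 - delta) / sqrt (real (k - j + 1)))"
  define FU where "FU = (\<lambda>(j,k). blockavg Y j k - sigma * std_normal_quantile delta / sqrt (real (k - j + 1)))"
  define GL where "GL = (\<lambda>(j::nat,k::nat). blockavg muIso j k - C' / sqrt (real (k - j + 1)))"
  define GU where "GU = (\<lambda>(j::nat,k::nat). blockavg muIso j k + C' / sqrt (real (k - j + 1)))"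
  have Leq: "L i = Sup (FL ` A)" unfolding L_def FL_def A_def by simp
  have Ueq: "U i = Inf (FU ` B)" unfolding U_def FU_def B_def by simp
  have LYBeq: "LYB i = Sup (GL ` A)" unfolding LYB_def GL_def A_def C'_def by simp
  have UYBeq: "UYB i = Inf (GU ` B)" unfolding UYB_def GU_def B_def C'_def by simp
  have "Sup (GL ` A) \<le> Sup (FL ` A)"
  proof (rule cSUP_least)
    show "A \<noteq> {}" using iA by blast
    fix x assume xA: "x \<in> A"
    obtain j k where x: "x = (j,k)" by (cases x)
    have jk: "1 \<le> j" "j \<le> k" "k \<le> n" "mu k \<le> mu i" using xA by (auto simp: x A_def Jfull_def)
    obtain j0 where j0: "1 \<le> j0" "j0 \<le> k"
      and red: "blockavg muIso j k - C' / sqrt (real (k - j + 1)) \<le> blockavg Y j0 k - C' / sqrt (real (k - j0 + 1))"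
      using L_red[OF iso C'0 jk(1-3)] by blast
    have j0A: "(j0,k) \<in> A" using j0 jk by (auto simp: A_def Jfull_def)
    have "C' / sqrt (real (k - j0 + 1)) \<ge> sigma * std_normal_quantile (1 - delta) / sqrt (real (k - j0 + 1))"
      using qL by (intro divide_right_mono) auto
    hence "GL x \<le> FL (j0,k)" using red by (simp add: x GL_def FL_def)
    also have "FL (j0,k) \<le> Sup (FL ` A)"
      using j0A finA by (intro cSUP_upper) (auto intro: bdd_above_finite)
    finally show "GL x \<le> Sup (FL ` A)" .
  qed
  moreover have "Inf (FU ` B) \<le> Inf (GU ` B)"
  proof (rule cINF_greatest)
    show "B \<noteq> {}" using iB by blast
    fix x assume xB: "x \<in> B"
    obtain j k where x: "x = (j,k)" by (cases x)
    have jk: "1 \<le> j" "j \<le> k" "k \<le> n" "mu i \<le> mu j" using xB by (auto simp: x B_def Jfull_def)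
    obtain k0 where k0: "j \<le> k0" "k0 \<le> n"
      and red: "blockavg Y j k0 + C' / sqrt (real (k0 - j + 1)) \<le> blockavg muIso j k + C' / sqrt (real (k - j + 1))"
      using U_red[OF iso C'0 jk(1-3)] by blast
    have k0B: "(j,k0) \<in> B" using k0 jk by (auto simp: B_def Jfull_def)
    have "- (sigma * std_normal_quantile delta) / sqrt (real (k0 - j + 1)) \<le> C' / sqrt (real (k0 - j + 1))"
      using qU by (intro divide_right_mono) auto
    hence "FU (j,k0) \<le> GU x" using red by (simp add: x GU_def FU_def)
    have "Inf (FU ` B) \<le> FU (j,k0)"
      using k0B finB by (intro cINF_lower) (auto intro: bdd_below_finite)
    also note \<open>FU (j,k0) \<le> GU x\<close>
    finally show "Inf (FU ` B) \<le> GU x" .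
  qed
  ultimately show "L i \<ge> LYB i \<and> U i \<le> UYB i" using Leq Ueq LYBeq UYBeq by simp
qed

end
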